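(* Let $a$ and $c$ be coprime positive integers with $a+c$ odd. Then for every integer $p\geq1$ and all $x,z\in\mathbb{R}$, $$ac^{p}S_{p}(a,c:x,z)+ca^{p}S_{p}(c,a:z,x)=\sum_{j=1}^{p}\binom{p-1}{j-1}a^{p+1-j}c^{j}\mathcal{E}_{p-j}(z)\mathcal{E}_{j-1}(x).$$
   Context: $E_n(x)$ denotes the $n$th Euler polynomial, defined by $\frac{2e^{xt}}{e^t+1}=\sum_{n\ge0}E_n(x)\frac{t^n}{n!}$. The $n$th Euler function $\mathcal{E}_n$ ($n\ge0$) is defined by $\mathcal{E}_n(x)=E_n(x)$ for $0\le x<1$ and $\mathcal{E}_n(x+m)=(-1)^m\mathcal{E}_n(x)$ for $m\in\mathbb{Z}$. For a positive integer $a$, a positive integer $c$, an integer $p\ge1$ and real $x,z$, define $$S_{p}(a,c:x,z)=\sum_{\mu=0}^{c-1}(-1)^{\mu}\mathcal{E}_{p-1}\Big(a\frac{\mu+z}{c}+x\Big)\mathcal{E}_{0}\Big(\frac{\mu+z}{c}\Big).$$ *)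

theory Defs
  imports Complex_Main "HOL-Computational_Algebra.Formal_Power_Series"
begin

definition euler_poly :: "nat \<Rightarrow> real \<Rightarrow> real" where
  "euler_poly n x =
     fact n * fps_nth (fps_const 2 * fps_exp x * inverse (fps_exp 1 + 1) :: real fps) n"

definition euler_fun :: "nat \<Rightarrow> real \<Rightarrow> real" where
  "euler_fun n x = (-1) powi \<lfloor>x\<rfloor> * euler_poly n (x - of_int \<lfloor>x\<rfloor>)"

definition S_sum :: "nat \<Rightarrow> nat \<Rightarrow> nat \<Rightarrow> real \<Rightarrow> real \<Rightarrow> real" where
  "S_sum p a c x z =
     (\<Sum>\<mu><c. (-1) ^ \<mu> * euler_fun (p - 1) (real a * ((real \<mu> + z) / real c) + x)
                       * euler_fun 0 ((real \<mu> + z) / real c))"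

end

theory Submission
  imports Defs
begin


definition ff :: "nat \<Rightarrow> 'a::comm_ring_1 \<Rightarrow> nat \<Rightarrow> 'a" where
  "ff c Q n = (-1)^(n div c) * Q^(n mod c)"

definition AA :: "nat \<Rightarrow> nat \<Rightarrow> 'a::comm_ring_1 \<Rightarrow> nat \<Rightarrow> 'a" where
  "AA a c Q U = (\<Sum>\<mu><c. (-1)^\<mu> * ff c Q (a*\<mu>+U))"

definition ss :: "nat \<Rightarrow> nat \<Rightarrow> nat \<Rightarrow> 'a::comm_ring_1" where
  "ss a c m = (\<Sum>\<mu><c. (-1)^\<mu> * (if c dvd a*\<mu>+m then (-1)^((a*\<mu>+m) div c) else 0))"

lemma ff_Suc:
  assumes "c > 0"
  shows "ff c Q (Suc n) = Q * ff c Q n + (if c dvd Suc n then (-1)^(Suc n div c) * (1 + Q^c) else 0)"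
proof (cases "c dvd Suc n")
  case True
  then have m: "Suc n mod c = 0" by simp
  then have "Suc (n mod c) = c" using assms by (metis mod_Suc nat.distinct(1) mod_less_divisor)
  then have nm: "n mod c = c - 1" by simp
  have d: "Suc n div c = Suc (n div c)" using m div_Suc by simp
  have q: "Q * Q^(c-1) = Q^c" using assms by (metis Suc_diff_1 power_Suc)
  show ?thesis unfolding ff_def using True m nm d
    by (simp add: algebra_simps flip: q)
next
  case False
  then have m: "Suc n mod c \<noteq> 0" by (metis dvd_eq_mod_eq_0)
  then have "Suc n mod c = Suc (n mod c)" by (metis mod_Suc)
  moreover have "Suc n div c = n div c" using m div_Suc by simp
  ultimately show ?thesis unfolding ff_def using False by (simp add: algebra_simps)
qed

lemma AA_Suc:
  assumes "c > 0"
  shows "AA a c Q (Suc U) = Q * AA a c Q U + (1 + Q^c) * ss a c (Suc U)"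
proof -
  have "AA a c Q (Suc U) = (\<Sum>\<mu><c. (-1)^\<mu> * ff c Q (Suc (a*\<mu>+U)))"
    unfolding AA_def by simp
  also have "\<dots> = (\<Sum>\<mu><c. Q * ((-1)^\<mu> * ff c Q (a*\<mu>+U))
      + (1 + Q^c) * ((-1)^\<mu> * (if c dvd a*\<mu>+Suc U then (-1)^((a*\<mu>+Suc U) div c) else 0)))"
    by (rule sum.cong) (auto simp: ff_Suc[OF assms] algebra_simps)
  also have "\<dots> = Q * AA a c Q U + (1 + Q^c) * ss a c (Suc U)"
    unfolding AA_def ss_def by (simp add: sum.distrib sum_distrib_left)
  finally show ?thesis .
qed

lemma uniq_sol:
  fixes a c m :: nat
  assumes "coprime a c" "\<mu>1 < c" "\<mu>2 < c" "c dvd a*\<mu>1+m" "c dvd a*\<mu>2+m"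
  shows "\<mu>1 = \<mu>2"
proof (rule ccontr)
  assume ne: "\<mu>1 \<noteq> \<mu>2"
  have key: "False" if "x < y" "y < c" "c dvd a*x+m" "c dvd a*y+m" for x y
  proof -
    from dvd_diff_nat[OF that(4) that(3)] have "c dvd (a*y+m) - (a*x+m)" .
    then have "c dvd a*(y-x)" by (simp add: diff_mult_distrib2)
    then have "c dvd (y-x)" using assms(1)
      by (metis coprime_commute coprime_dvd_mult_right_iff)
    moreover have "0 < y - x" "y - x < c" using that by auto
    ultimately show False using nat_dvd_not_less by blast
  qed
  show False
  proof (cases "\<mu>1 < \<mu>2")
    case True then show ?thesis using key assms by blast
  next
    case False then have "\<mu>2 < \<mu>1" using ne by simp
    then show ?thesis using key assms by blast
  qed
qed

lemma exist_sol:
  fixes a c m :: nat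
  assumes "coprime a c" "c > 0"
  shows "\<exists>\<mu><c. c dvd a*\<mu>+m"
proof -
  let ?f = "\<lambda>\<mu>. (a*\<mu>+m) mod c"
  have inj: "inj_on ?f {..<c}"
  proof (rule inj_onI)
    fix x y assume xy: "x \<in> {..<c}" "y \<in> {..<c}" "?f x = ?f y"
    have key: "False" if "x' < y'" "y' < c" "?f x' = ?f y'" for x' y'
    proof -
      have le: "a*x'+m \<le> a*y'+m" using that by simp
      have "c dvd (a*y'+m) - (a*x'+m)" by (metis mod_eq_dvd_iff_nat[OF le] that(3))
      then have "c dvd a*(y'-x')" by (simp add: diff_mult_distrib2)
      then have "c dvd (y'-x')" using assms(1)
        by (metis coprime_commute coprime_dvd_mult_right_iff)
      moreover have "0 < y' - x'" "y' - x' < c" using that by auto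
      ultimately show False using nat_dvd_not_less by blast
    qed
    show "x = y"
    proof (rule ccontr)
      assume "x \<noteq> y"
      then have "x < y \<or> y < x" by auto
      then show False using key[of x y] key[of y x] xy by auto
    qed
  qed
  have "?f ` {..<c} \<subseteq> {..<c}" using assms(2) by auto
  then have "?f ` {..<c} = {..<c}" using endo_inj_surj[OF _ _ inj] by simp
  moreover have "0 \<in> {..<c}" using assms(2) by simp
  ultimately have "0 \<in> ?f ` {..<c}" by simp
  then obtain \<mu> where "\<mu> < c" "?f \<mu> = 0" by auto
  then show ?thesis by (auto simp: mod_eq_0_iff_dvd)
qed

lemma ss_single:
  fixes a c m :: nat
  assumes "coprime a c" "\<nu>0 < c" "c dvd a*\<nu>0+m"
  shows "ss a c m = ((-1)^(\<nu>0 + (a*\<nu>0+m) div c) :: 'a::comm_ring_1)"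
proof -
  have "ss a c m = (\<Sum>\<mu>\<in>{\<nu>0}. ((-1)^\<mu> * (if c dvd a*\<mu>+m then (-1)^((a*\<mu>+m) div c) else 0) :: 'a))"
    unfolding ss_def
  proof (rule sum.mono_neutral_right)
    show "\<forall>i\<in>{..<c} - {\<nu>0}. ((-1)^i * (if c dvd a*i+m then (-1)^((a*i+m) div c) else 0) :: 'a) = 0"
      using uniq_sol[OF assms(1) _ assms(2) _ assms(3)] by auto
  qed (use assms in auto)
  then show ?thesis using assms by (simp add: power_add)
qed

lemma neg1_odd_sum:
  assumes "odd (i + j)"
  shows "((-1)^i + (-1)^j :: 'a::comm_ring_1) = 0"
proof -
  have "odd i \<longleftrightarrow> even j" using assms by auto
  then show ?thesis by (cases "even i") (auto simp: neg_one_even_power neg_one_odd_power)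
qed

lemma ss_pair:
  assumes "coprime a c" "a > 0" "c > 0" "odd (a+c)" "1 \<le> m" "m \<le> a + c - 1"
  shows "(ss a c m + ss c a m :: 'a::comm_ring_1) = 0"
proof -
  obtain \<mu> where \<mu>: "\<mu> < c" "c dvd a*\<mu>+m" using exist_sol[OF assms(1,3)] by blast
  define \<alpha> where "\<alpha> = (a*\<mu>+m) div c"
  have ca: "c*\<alpha> = a*\<mu>+m" using \<mu> unfolding \<alpha>_def by simp
  have "a*\<mu> \<le> a*(c-1)" using \<mu> by (intro mult_le_mono2) simp
  then have "a*\<mu> + m \<le> a*(c-1) + (a+c-1)" using assms(6) by (rule add_mono)
  moreover have "a*(c-1) + (a+c-1) < c*(a+1)" using assms(3)
    by (cases c) (auto simp: algebra_simps)
  ultimately have "c*\<alpha> < c*(a+1)" using ca by simp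
  then have "\<alpha> < a + 1" by (metis mult_less_cancel1)
  then have al: "\<alpha> \<le> a" by simp
  have a1: "\<alpha> \<ge> 1" using ca assms(5) by (cases \<alpha>) auto
  define \<nu> where "\<nu> = a - \<alpha>"
  have \<nu>a: "\<nu> < a" using a1 assms(2) unfolding \<nu>_def by simp
  have e: "c*\<nu> + m = a*(c-\<mu>)"
  proof -
    have cai: "int c * int \<alpha> = int a * int \<mu> + int m" using ca by (metis of_nat_add of_nat_mult)
    have "int (c*\<nu> + m) = int c * (int a - int \<alpha>) + int m" unfolding \<nu>_def using al by (simp add: of_nat_diff)
    also have "\<dots> = int a * (int c - int \<mu>)" using cai by (simp add: algebra_simps)
    also have "\<dots> = int (a*(c-\<mu>))" using \<mu> by (simp add: of_nat_diff)
    finally show ?thesis by (simp only: of_nat_eq_iff)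
  qed
  have s1: "ss a c m = ((-1)^(\<mu>+\<alpha>) :: 'a)" using ss_single[OF assms(1) \<mu>] \<alpha>_def by simp
  have "coprime c a" using assms(1) by (simp add: coprime_commute)
  then have s2: "ss c a m = ((-1)^(\<nu> + (c-\<mu>)) :: 'a)"
    using ss_single[of c a \<nu> m] \<nu>a e assms(2) by simp
  have "odd ((\<mu>+\<alpha>) + (\<nu> + (c-\<mu>)))"
  proof -
    have "(\<mu>+\<alpha>) + (\<nu> + (c-\<mu>)) = a + c" unfolding \<nu>_def using al \<mu> by simp
    then show ?thesis using assms(4) by simp
  qed
  then have "((-1)^(\<mu>+\<alpha>) + (-1)^(\<nu> + (c-\<mu>)) :: 'a) = 0" by (rule neg1_odd_sum)
  then show ?thesis using s1 s2 by simp
qed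

lemma ss_end:
  assumes "coprime a c" "a > 0" "c > 0" "odd (a+c)"
  shows "(ss a c (a+c) :: 'a::comm_ring_1) = -1"
proof -
  have e: "a*(c-1) + (a+c) = c*(a+1)" using assms(3)
    by (cases c) (auto simp: algebra_simps)
  have d: "(a*(c-1) + (a+c)) div c = a+1" unfolding e using assms by simp
  have dv: "c dvd a*(c-1)+(a+c)" unfolding e by simp
  have "ss a c (a+c) = ((-1)^((c-1) + (a*(c-1)+(a+c)) div c) :: 'a)"
    by (rule ss_single[OF assms(1) _ dv]) (use assms in simp)
  also have "\<dots> = (-1)^(a+c)" using d assms by simp
  finally show ?thesis using assms(4) by simp
qed

lemma ff_add_c:
  assumes "c > 0" shows "ff c Q (n + c) = - ff c Q n"
  unfolding ff_def using assms by simp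

lemma ff_ac:
  assumes "c > 0" shows "ff c Q (a*c + n) = (-1)^a * ff c Q n"
  unfolding ff_def using assms by (simp add: power_add)

lemma AA_own:
  assumes "c > 0" shows "AA a c Q (U + c) = - AA a c Q U"
proof -
  have "\<And>\<mu>. ff c Q (a*\<mu> + (U + c)) = - ff c Q (a*\<mu>+U)" using ff_add_c[OF assms] by (metis add.assoc)
  then show ?thesis unfolding AA_def by (simp add: sum_negf)
qed

lemma AA_other:
  assumes "c > 0" "odd (a+c)"
  shows "AA a c Q (U + a) = - AA a c Q U + 2 * ff c Q U"
proof -
  define h where "h i = (-1)^i * ff c Q (a*i+U)" for i
  have 1: "(\<Sum>i<Suc c. h i) = h 0 + (\<Sum>i<c. h (Suc i))" by (rule sum.lessThan_Suc_shift)
  have 2: "(\<Sum>i<c. h (Suc i)) = - AA a c Q (U + a)"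
    unfolding AA_def h_def by (simp add: sum_negf algebra_simps)
  have 3: "(\<Sum>i<Suc c. h i) = AA a c Q U + h c" unfolding AA_def h_def by simp
  have "h c = (-1)^c * ((-1)^a * ff c Q U)" unfolding h_def using ff_ac[OF assms(1), of Q a U]
    by (simp add: mult.commute)
  also have "\<dots> = (-1)^(a+c) * ff c Q U" by (simp add: power_add)
  also have "\<dots> = - ff c Q U" using assms(2) by simp
  finally have 4: "h c = - ff c Q U" .
  have 5: "h 0 = ff c Q U" unfolding h_def by simp
  show ?thesis using 1 2 3 4 5 by (simp add: algebra_simps)
qed

definition Phi :: "nat \<Rightarrow> nat \<Rightarrow> 'a::comm_ring_1 \<Rightarrow> nat \<Rightarrow> 'a" where
  "Phi a c Q U = (Q^a+1)*AA a c Q U + (Q^c+1)*AA c a Q U"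

lemma Phi_Suc:
  assumes "a > 0" "c > 0"
  shows "Phi a c Q (Suc U) = Q * Phi a c Q U + (Q^a+1)*(Q^c+1)*(ss a c (Suc U) + ss c a (Suc U))"
  unfolding Phi_def AA_Suc[OF assms(2)] AA_Suc[OF assms(1)] by (simp add: algebra_simps)

lemma Phi_pow:
  assumes "coprime a c" "a > 0" "c > 0" "odd (a+c)"
  shows "m \<le> a + c - 1 \<Longrightarrow> Phi a c Q m = Q^m * Phi a c Q 0"
proof (induction m)
  case 0 then show ?case by simp
next
  case (Suc m)
  have "(ss a c (Suc m) + ss c a (Suc m) :: 'a) = 0"
    by (rule ss_pair) (use assms Suc.prems in auto)
  then show ?case using Phi_Suc[OF assms(2,3), of Q m] Suc by simp
qed

lemma Phi_end:
  assumes "coprime a c" "a > 0" "c > 0" "odd (a+c)"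
  shows "Phi a c Q (a+c) = Q^(a+c) * Phi a c Q 0 - 2*(Q^a+1)*(Q^c+1)"
proof -
  define n where "n = a + c - 1"
  have e: "Suc n = a + c" using assms unfolding n_def by simp
  have p: "Phi a c Q n = Q^n * Phi a c Q 0" by (rule Phi_pow[OF assms]) (simp add: n_def)
  have s1: "ss a c (Suc n) = (-1::'a)" unfolding e by (rule ss_end[OF assms])
  have s2: "ss c a (Suc n) = (-1::'a)" unfolding e add.commute[of a c]
    by (rule ss_end) (use assms in \<open>auto simp: coprime_commute add.commute\<close>)
  have "Phi a c Q (Suc n) = Q * (Q^n * Phi a c Q 0) + (Q^a+1)*(Q^c+1)*(-1 + -1)"
    using Phi_Suc[OF assms(2,3), of Q n] p s1 s2 by simp
  also have "\<dots> = Q^(Suc n) * Phi a c Q 0 - 2*(Q^a+1)*(Q^c+1)" by (simp add: algebra_simps)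
  finally show ?thesis unfolding e .
qed

lemma Phi_cyc:
  assumes "a > 0" "c > 0" "odd (a+c)"
  shows "Phi a c Q (a+c) = Phi a c Q 0 - 2*(Q^a+1) - 2*(Q^c+1)"
proof -
  have f0: "ff c Q 0 = 1" "ff a Q 0 = 1" by (simp_all add: ff_def)
  have "AA a c Q (a+c) = AA a c Q ((0+a)+c)" by simp
  also have "\<dots> = - AA a c Q (0+a)" by (rule AA_own[OF assms(2)])
  also have "\<dots> = AA a c Q 0 - 2" using AA_other[OF assms(2,3), of Q 0] f0 by simp
  finally have 1: "AA a c Q (a+c) = AA a c Q 0 - 2" .
  have o: "odd (c+a)" using assms(3) by (simp add: add.commute)
  have "AA c a Q (a+c) = AA c a Q ((0+c)+a)" by (simp add: add.commute)
  also have "\<dots> = - AA c a Q (0+c)" by (rule AA_own[OF assms(1)])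
  also have "\<dots> = AA c a Q 0 - 2" using AA_other[OF assms(1) o, of Q 0] f0 by simp
  finally have 2: "AA c a Q (a+c) = AA c a Q 0 - 2" .
  show ?thesis unfolding Phi_def 1 2 by (simp add: algebra_simps)
qed

lemma Phi_zero:
  fixes Q :: "'a::idom"
  assumes "coprime a c" "a > 0" "c > 0" "odd (a+c)" "Q^(a+c) \<noteq> 1"
  shows "Phi a c Q 0 = 2"
proof -
  have "Q^(a+c) * Phi a c Q 0 - 2*(Q^a+1)*(Q^c+1) = Phi a c Q 0 - 2*(Q^a+1) - 2*(Q^c+1)"
    using Phi_end[OF assms(1-4), of Q] Phi_cyc[OF assms(2-4), of Q] by simp
  then have "(Q^(a+c) - 1) * Phi a c Q 0 = (Q^(a+c) - 1) * 2"
    by (simp add: algebra_simps power_add)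
  moreover have "Q^(a+c) - 1 \<noteq> 0" using assms(5) by simp
  ultimately show ?thesis using mult_left_cancel by blast
qed

lemma Phi_formula:
  fixes Q :: "'a::idom"
  assumes "coprime a c" "a > 0" "c > 0" "odd (a+c)" "Q^(a+c) \<noteq> 1" "U < a + c"
  shows "Phi a c Q U = 2 * Q^U"
  using Phi_pow[OF assms(1-4), of U Q] Phi_zero[OF assms(1-5)] assms(6) by simp



unbundle fps_syntax

definition EG :: "real \<Rightarrow> real \<Rightarrow> real fps" where
  "EG \<alpha> y = fps_const 2 * fps_exp (\<alpha>*y) * inverse (fps_exp \<alpha> + 1)"

lemma EG_nth: "EG \<alpha> y $ n = \<alpha>^n * euler_poly n y / fact n"
proof -
  define L :: "real fps" where "L = fps_const \<alpha> * fps_X"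
  define B where "B = (fps_const 2 * fps_exp y * inverse (fps_exp 1 + 1) :: real fps)"
  have L0: "L $ 0 = 0" unfolding L_def by simp
  have e0: "(fps_exp 1 + 1 :: real fps) $ 0 \<noteq> 0" by simp
  have "B oo L = (fps_const 2 oo L) * (fps_exp y oo L) * (inverse (fps_exp 1 + 1) oo L)"
    unfolding B_def by (simp add: fps_compose_mult_distrib[OF L0])
  also have "inverse (fps_exp 1 + 1) oo L = inverse ((fps_exp 1 + 1) oo L)"
    by (rule fps_inverse_compose[OF L0 e0])
  also have "(fps_exp 1 + 1) oo L = fps_exp \<alpha> + 1"
    unfolding L_def by (simp add: fps_compose_add_distrib)
  also have "fps_exp y oo L = fps_exp (\<alpha>*y)" unfolding L_def by simp
  finally have "B oo L = EG \<alpha> y" unfolding EG_def by simp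
  then have "EG \<alpha> y $ n = (B oo L) $ n" by simp
  also have "\<dots> = \<alpha>^n * B $ n" unfolding L_def fps_compose_linear by simp
  finally have "EG \<alpha> y $ n = \<alpha>^n * B $ n" .
  moreover have "B $ n = euler_poly n y / fact n" unfolding B_def euler_poly_def by simp
  ultimately show ?thesis by simp
qed

lemma euler_poly_0: "euler_poly 0 y = 1"
  unfolding euler_poly_def by simp

lemma ef_shift: "euler_fun n (y + 1) = - euler_fun n y"
proof -
  have f: "\<lfloor>y + 1\<rfloor> = \<lfloor>y\<rfloor> + 1" by simp
  have "((-1::real) powi (\<lfloor>y\<rfloor> + 1)) = (-1) powi \<lfloor>y\<rfloor> * (-1)"
    by (rule power_int_add_1) simp
  then show ?thesis unfolding euler_fun_def f by simp
qed

lemma ef_shift_nat: "euler_fun n (y + real k) = (-1)^k * euler_fun n y"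
proof (induction k)
  case 0 then show ?case by simp
next
  case (Suc k)
  have "euler_fun n (y + real (Suc k)) = euler_fun n ((y + real k) + 1)" by (simp add: ac_simps)
  also have "\<dots> = - euler_fun n (y + real k)" by (rule ef_shift)
  finally show ?case using Suc by simp
qed

lemma ef_unit: "0 \<le> y \<Longrightarrow> y < 1 \<Longrightarrow> euler_fun n y = euler_poly n y"
proof -
  assume "0 \<le> y" "y < 1"
  then have "\<lfloor>y\<rfloor> = 0" by (simp add: floor_eq_iff)
  then show ?thesis unfolding euler_fun_def by simp
qed

lemma S_shift_x: "S_sum p a c (x+1) z = - S_sum p a c x z"
  unfolding S_sum_def
  by (simp add: sum_negf add.assoc[symmetric] ef_shift)

lemma S_shift_z:
  assumes "c > 0" "odd (a+c)"
  shows "S_sum p a c x (z+1) = - S_sum p a c x z"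
proof -
  define h where "h m = euler_fun (p-1) (real a * ((real m + z) / real c) + x)
                   * euler_fun 0 ((real m + z) / real c)" for m :: nat
  define g where "g i = (-1)^i * h i" for i :: nat
  have S0: "S_sum p a c x z = (\<Sum>i<c. g i)" unfolding S_sum_def g_def h_def by (simp add: mult.assoc)
  have S1: "S_sum p a c x (z+1) = - (\<Sum>i<c. g (Suc i))" unfolding S_sum_def g_def h_def
    by (simp add: sum_negf algebra_simps)
  have 1: "(\<Sum>i<Suc c. g i) = g 0 + (\<Sum>i<c. g (Suc i))" by (rule sum.lessThan_Suc_shift)
  have 3: "(\<Sum>i<Suc c. g i) = (\<Sum>i<c. g i) + g c" by simp
  have hc: "h c = (-1)^a * (-1) * h 0"
  proof -
    have a1: "real a * ((real c + z) / real c) + x = (real a * ((0 + z) / real c) + x) + real a"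
      using assms(1) by (simp add: field_simps)
    have a2: "(real c + z) / real c = (0 + z) / real c + 1"
      using assms(1) by (simp add: field_simps)
    show ?thesis unfolding h_def
      by (subst a1, subst a2, subst ef_shift_nat, subst ef_shift) simp
  qed
  have gc: "g c = g 0"
  proof -
    have "g c = (-1)^(a+c+1) * h 0" unfolding g_def hc by (simp add: power_add)
    also have "\<dots> = h 0" using assms(2) by simp
    finally show ?thesis unfolding g_def by simp
  qed
  show ?thesis using S0 S1 1 3 gc by simp
qed





lemma floor_split:
  fixes N c :: nat and \<theta> :: real
  assumes "c > 0" "0 \<le> \<theta>" "\<theta> < 1"
  shows "\<lfloor>(real N + \<theta>) / real c\<rfloor> = int (N div c)"
    and "(real N + \<theta>) / real c - real (N div c) = (\<theta> + real (N mod c)) / real c"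
proof -
  have N: "real N = real c * real (N div c) + real (N mod c)"
    by (metis div_mult_mod_eq of_nat_add of_nat_mult mult.commute)
  have r: "real (N mod c) + 1 \<le> real c" using assms(1)
    by (metis Suc_leI mod_less_divisor of_nat_Suc of_nat_le_iff add.commute)
  have c: "real c > 0" using assms by simp
  have "real (N div c) \<le> (real N + \<theta>) / real c"
    using c N assms by (simp add: pos_le_divide_eq algebra_simps)
  moreover have "(real N + \<theta>) / real c < real (N div c) + 1"
    using c N assms r by (simp add: pos_divide_less_eq algebra_simps)
  ultimately show "\<lfloor>(real N + \<theta>) / real c\<rfloor> = int (N div c)"
    by (simp add: floor_eq_iff)
  show "(real N + \<theta>) / real c - real (N div c) = (\<theta> + real (N mod c)) / real c"
    using c N by (simp add: field_simps)
qed

definition yy :: "nat \<Rightarrow> nat \<Rightarrow> real \<Rightarrow> real \<Rightarrow> nat \<Rightarrow> real" where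
  "yy a c x z \<mu> = real a * ((real \<mu> + z) / real c) + x"

definition sg :: "nat \<Rightarrow> nat \<Rightarrow> real \<Rightarrow> real \<Rightarrow> nat \<Rightarrow> real" where
  "sg a c x z \<mu> = (-1)^\<mu> * (-1) powi \<lfloor>yy a c x z \<mu>\<rfloor>"

definition fr :: "nat \<Rightarrow> nat \<Rightarrow> real \<Rightarrow> real \<Rightarrow> nat \<Rightarrow> real" where
  "fr a c x z \<mu> = yy a c x z \<mu> - of_int \<lfloor>yy a c x z \<mu>\<rfloor>"

definition FF :: "nat \<Rightarrow> nat \<Rightarrow> real \<Rightarrow> real \<Rightarrow> real fps" where
  "FF a c x z = (\<Sum>\<mu><c. fps_const (sg a c x z \<mu>) * EG (real c) (fr a c x z \<mu>))"

lemma FF_coeff: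
  assumes "c > 0" "0 \<le> z" "z < 1"
  shows "fact n * FF a c x z $ n = real c ^ n * S_sum (Suc n) a c x z"
proof -
  have e0: "euler_fun 0 ((real \<mu> + z) / real c) = 1" if "\<mu> < c" for \<mu>
  proof -
    have "real \<mu> + 1 \<le> real c" using that by (metis Suc_leI of_nat_Suc of_nat_le_iff add.commute)
    then have "(real \<mu> + z) / real c < 1" using assms by (simp add: pos_divide_less_eq)
    moreover have "0 \<le> (real \<mu> + z) / real c" using assms by simp
    ultimately show ?thesis using ef_unit euler_poly_0 by simp
  qed
  have "fact n * FF a c x z $ n = (\<Sum>\<mu><c. sg a c x z \<mu> * (real c ^ n * euler_poly n (fr a c x z \<mu>)))"
    unfolding FF_def fps_sum_nth by (simp add: EG_nth sum_distrib_left)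
  also have "\<dots> = real c ^ n * S_sum (Suc n) a c x z"
    unfolding S_sum_def sum_distrib_left
    apply (rule sum.cong, simp)
    subgoal for \<mu> using e0[of \<mu>] by (simp add: sg_def fr_def yy_def euler_fun_def[of n])
    done
  finally show ?thesis .
qed

lemma FF_form:
  assumes "a > 0" "c > 0" "u = real a * z + real c * x" "0 \<le> u"
  shows "FF a c x z = fps_const 2 * fps_exp (u - of_int \<lfloor>u\<rfloor>) * inverse (fps_exp (real c) + 1)
           * AA a c (fps_exp 1) (nat \<lfloor>u\<rfloor>)"
proof -
  define U where "U = nat \<lfloor>u\<rfloor>"
  define \<theta> where "\<theta> = u - of_int \<lfloor>u\<rfloor>"
  have U: "real U = of_int \<lfloor>u\<rfloor>" unfolding U_def using assms(4) by simp
  have th: "0 \<le> \<theta>" "\<theta> < 1" unfolding \<theta>_def by linarith+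
  define Q :: "real fps" where "Q = fps_exp 1"
  have tm: "fps_const (sg a c x z \<mu>) * EG (real c) (fr a c x z \<mu>) =
      fps_const 2 * fps_exp \<theta> * inverse (fps_exp (real c) + 1) * ((-1)^\<mu> * ff c Q (a*\<mu>+U))" for \<mu>
  proof -
    have y: "yy a c x z \<mu> = (real (a*\<mu>+U) + \<theta>) / real c"
      unfolding yy_def \<theta>_def using U assms(2,3) by (simp add: field_simps)
    have fl: "\<lfloor>yy a c x z \<mu>\<rfloor> = int ((a*\<mu>+U) div c)" unfolding y by (rule floor_split(1)[OF assms(2) th])
    have frv: "fr a c x z \<mu> = (\<theta> + real ((a*\<mu>+U) mod c)) / real c"
      unfolding fr_def fl using floor_split(2)[OF assms(2) th, of "a*\<mu>+U"] y by simp
    have cf: "real c * fr a c x z \<mu> = \<theta> + real ((a*\<mu>+U) mod c)" unfolding frv using assms(2) by simp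
    have sgv: "sg a c x z \<mu> = (-1)^\<mu> * (-1)^((a*\<mu>+U) div c)" unfolding sg_def fl by simp
    have ex: "fps_exp (\<theta> + real ((a*\<mu>+U) mod c)) = fps_exp \<theta> * Q^((a*\<mu>+U) mod c)"
      unfolding Q_def fps_exp_add_mult fps_exp_power_mult by simp
    show ?thesis unfolding EG_def cf ex sgv ff_def
      by (simp add: fps_const_mult[symmetric] fps_const_power[symmetric] fps_const_neg[symmetric] algebra_simps)
  qed
  show ?thesis unfolding FF_def tm AA_def U_def[symmetric] \<theta>_def[symmetric] Q_def[symmetric]
    by (simp add: sum_distrib_left mult.assoc)
qed


lemma FF_identity:
  assumes "a > 0" "c > 0" "coprime a c" "odd (a+c)" "0 \<le> x" "x < 1" "0 \<le> z" "z < 1"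
  shows "FF a c x z + FF c a z x = EG (real c) x * EG (real a) z"
proof -
  define u where "u = real a * z + real c * x"
  define U where "U = nat \<lfloor>u\<rfloor>"
  define \<theta> where "\<theta> = u - of_int \<lfloor>u\<rfloor>"
  define Q :: "real fps" where "Q = fps_exp 1"
  have u0: "0 \<le> u" unfolding u_def using assms by simp
  have "real a * z < real a" using assms by simp
  moreover have "real c * x < real c" using assms by simp
  ultimately have "u < real a + real c" unfolding u_def by simp
  then have "\<lfloor>u\<rfloor> < int (a + c)" by linarith
  then have Ult: "U < a + c" unfolding U_def using u0 by (simp add: nat_less_iff)
  have uU: "u = \<theta> + real U" unfolding \<theta>_def U_def using u0 by simp
  have Qa: "fps_exp (real a) = Q^a" "fps_exp (real c) = Q^c" unfolding Q_def fps_exp_power_mult by simp_all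
  have Qn: "Q^(a+c) \<noteq> 1"
  proof
    assume "Q^(a+c) = 1"
    then have "fps_exp (real (a+c)) = (1 :: real fps)" unfolding Q_def fps_exp_power_mult by simp
    then have "fps_exp (real (a+c)) $ 1 = (1 :: real fps) $ 1" by simp
    then show False using assms(1) by simp
  qed
  have F1: "FF a c x z = fps_const 2 * fps_exp \<theta> * inverse (Q^c + 1) * AA a c Q U"
    using FF_form[OF assms(1,2) u_def u0] unfolding U_def \<theta>_def Q_def Qa(2)[unfolded Q_def] .
  have F2: "FF c a z x = fps_const 2 * fps_exp \<theta> * inverse (Q^a + 1) * AA c a Q U"
    using FF_form[OF assms(2,1) _ u0, of x z] unfolding U_def \<theta>_def Q_def Qa(1)[unfolded Q_def] u_def
    by (simp add: add.commute)
  have Ia: "inverse (Q^a + 1) * (Q^a + 1) = 1" by (rule inverse_mult_eq_1) (simp add: Q_def fps_exp_power_mult)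
  have Ic: "inverse (Q^c + 1) * (Q^c + 1) = 1" by (rule inverse_mult_eq_1) (simp add: Q_def fps_exp_power_mult)
  define D where "D = (Q^a + 1) * (Q^c + 1)"
  have D0: "D \<noteq> 0"
  proof
    assume "D = 0"
    then have "D $ 0 = 0" by simp
    then show False unfolding D_def Q_def by (simp add: fps_exp_power_mult)
  qed
  have L: "(FF a c x z + FF c a z x) * D = 2 * fps_exp \<theta> * Phi a c Q U"
  proof -
    have "(FF a c x z + FF c a z x) * D =
        2 * fps_exp \<theta> * ((inverse (Q^c + 1) * (Q^c + 1)) * (Q^a+1) * AA a c Q U
          + (inverse (Q^a + 1) * (Q^a + 1)) * (Q^c+1) * AA c a Q U)"
      unfolding F1 F2 D_def by (simp add: algebra_simps flip: fps_numeral_fps_const)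
    also have "\<dots> = 2 * fps_exp \<theta> * Phi a c Q U" unfolding Ia Ic Phi_def by simp
    finally show ?thesis .
  qed
  have R: "(EG (real c) x * EG (real a) z) * D = 4 * fps_exp u"
  proof -
    have "(EG (real c) x * EG (real a) z) * D = 4 * (fps_exp (real c * x) * fps_exp (real a * z))
        * (inverse (Q^c + 1) * (Q^c + 1)) * (inverse (Q^a + 1) * (Q^a + 1))"
      unfolding EG_def D_def Qa by (simp add: algebra_simps flip: fps_numeral_fps_const)
    also have "\<dots> = 4 * fps_exp u" unfolding Ia Ic u_def fps_exp_add_mult[symmetric]
      by (simp add: add.commute)
    finally show ?thesis .
  qed
  have "Phi a c Q U = 2 * Q^U" by (rule Phi_formula[OF assms(3,1,2,4) Qn Ult])
  then have "(FF a c x z + FF c a z x) * D = (EG (real c) x * EG (real a) z) * D"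
    unfolding L R uU fps_exp_add_mult Q_def fps_exp_power_mult
    by (simp add: algebra_simps fps_exp_power_mult)
  then show ?thesis using D0 by simp
qed


lemma main_unit:
  assumes "a > 0" "c > 0" "coprime a c" "odd (a+c)" "0 \<le> x" "x < 1" "0 \<le> z" "z < 1"
  shows "real c^n * S_sum (Suc n) a c x z + real a^n * S_sum (Suc n) c a z x =
    (\<Sum>i\<le>n. real (n choose i) * real c^i * real a^(n-i) * euler_poly i x * euler_poly (n-i) z)"
proof -
  have "real c^n * S_sum (Suc n) a c x z + real a^n * S_sum (Suc n) c a z x
      = fact n * (FF a c x z + FF c a z x) $ n"
    using FF_coeff[OF assms(2,7,8), of n a x] FF_coeff[OF assms(1,5,6), of n c z]
    by (simp add: algebra_simps)
  also have "\<dots> = fact n * (EG (real c) x * EG (real a) z) $ n"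
    using FF_identity[OF assms] by simp
  also have "\<dots> = (\<Sum>i=0..n. fact n * ((real c^i * euler_poly i x / fact i) *
        (real a^(n-i) * euler_poly (n-i) z / fact (n-i))))"
    unfolding fps_mult_nth EG_nth sum_distrib_left by simp
  also have "\<dots> = (\<Sum>i\<le>n. real (n choose i) * real c^i * real a^(n-i) * euler_poly i x * euler_poly (n-i) z)"
    unfolding atLeast0AtMost
    by (rule sum.cong) (auto simp: binomial_fact field_simps)
  finally show ?thesis .
qed

lemma antiper:
  fixes F :: "real \<Rightarrow> real"
  assumes "\<And>t. F (t + 1) = - F t"
  shows "F (t + of_int k) = 0 \<longleftrightarrow> F t = 0"
proof (induction k rule: int_induct[where k=0])
  case base then show ?case by simp
next
  case (step1 i)
  have "F (t + of_int (i+1)) = F ((t + of_int i) + 1)" by (simp add: ac_simps)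
  also have "\<dots> = - F (t + of_int i)" by (rule assms)
  finally show ?case using step1 by simp
next
  case (step2 i)
  have "F (t + of_int i) = F ((t + of_int (i-1)) + 1)" by (simp add: ac_simps)
  also have "\<dots> = - F (t + of_int (i - 1))" by (rule assms)
  finally show ?case using step2 by simp
qed


definition LHS :: "nat \<Rightarrow> nat \<Rightarrow> nat \<Rightarrow> real \<Rightarrow> real \<Rightarrow> real" where
  "LHS p a c x z = real a * real c ^ p * S_sum p a c x z + real c * real a ^ p * S_sum p c a z x"

definition RHS :: "nat \<Rightarrow> nat \<Rightarrow> nat \<Rightarrow> real \<Rightarrow> real \<Rightarrow> real" where
  "RHS p a c x z = (\<Sum>j=1..p. real ((p - 1) choose (j - 1)) * real a ^ (p + 1 - j) * real c ^ j
                * euler_fun (p - j) z * euler_fun (j - 1) x)"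

lemma unit_case:
  assumes "a > 0" "c > 0" "coprime a c" "odd (a+c)" "0 \<le> x" "x < 1" "0 \<le> z" "z < 1"
  shows "LHS (Suc n) a c x z = RHS (Suc n) a c x z"
proof -
  have "RHS (Suc n) a c x z = (\<Sum>i=0..n. real (n choose i) * real a ^ (Suc n + 1 - Suc i) * real c ^ Suc i
                * euler_fun (Suc n - Suc i) z * euler_fun i x)"
    unfolding RHS_def One_nat_def sum.shift_bounds_cl_Suc_ivl by simp
  also have "\<dots> = real a * real c * (\<Sum>i\<le>n. real (n choose i) * real c^i * real a^(n-i) * euler_poly i x * euler_poly (n-i) z)"
    unfolding atLeast0AtMost sum_distrib_left
    by (rule sum.cong) (auto simp: ef_unit assms Suc_diff_le)
  also have "\<dots> = LHS (Suc n) a c x z"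
    unfolding main_unit[OF assms, symmetric] LHS_def by (simp add: algebra_simps)
  finally show ?thesis by simp
qed

lemma shift_x:
  assumes "a > 0" "c > 0" "odd (a+c)"
  shows "LHS p a c (x+1) z - RHS p a c (x+1) z = - (LHS p a c x z - RHS p a c x z)"
proof -
  have o: "odd (c+a)" using assms by (simp add: add.commute)
  have "LHS p a c (x+1) z = - LHS p a c x z"
    unfolding LHS_def S_shift_x S_shift_z[OF assms(1) o] by simp
  moreover have "RHS p a c (x+1) z = - RHS p a c x z"
    unfolding RHS_def ef_shift by (simp add: sum_negf)
  ultimately show ?thesis by simp
qed

lemma shift_z:
  assumes "a > 0" "c > 0" "odd (a+c)"
  shows "LHS p a c x (z+1) - RHS p a c x (z+1) = - (LHS p a c x z - RHS p a c x z)"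
proof -
  have "LHS p a c x (z+1) = - LHS p a c x z"
    unfolding LHS_def S_shift_x S_shift_z[OF assms(2,3)] by simp
  moreover have "RHS p a c x (z+1) = - RHS p a c x z"
    unfolding RHS_def ef_shift by (simp add: sum_negf)
  ultimately show ?thesis by simp
qed

theorem corollary1:
  fixes a c p :: nat and x z :: real
  assumes "a > 0" and "c > 0" and "coprime a c" and "odd (a + c)" and "p \<ge> 1"
  shows "real a * real c ^ p * S_sum p a c x z + real c * real a ^ p * S_sum p c a z x =
    (\<Sum>j=1..p. real ((p - 1) choose (j - 1)) * real a ^ (p + 1 - j) * real c ^ j
                * euler_fun (p - j) z * euler_fun (j - 1) x)"
proof -
  obtain n where pn: "p = Suc n" using assms(5) by (cases p) auto
  define x0 where "x0 = x - of_int \<lfloor>x\<rfloor>"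
  define z0 where "z0 = z - of_int \<lfloor>z\<rfloor>"
  have x0: "0 \<le> x0" "x0 < 1" unfolding x0_def by linarith+
  have z0: "0 \<le> z0" "z0 < 1" unfolding z0_def by linarith+
  define D where "D x z = LHS p a c x z - RHS p a c x z" for x z
  have "D x0 z0 = 0" unfolding D_def pn using unit_case[OF assms(1-4) x0 z0] by simp
  then have "D (x0 + of_int \<lfloor>x\<rfloor>) z0 = 0"
    using antiper[of "\<lambda>t. D t z0" x0 "\<lfloor>x\<rfloor>"] shift_x[OF assms(1,2,4)] unfolding D_def by simp
  then have "D x z0 = 0" unfolding x0_def by simp
  then have "D x (z0 + of_int \<lfloor>z\<rfloor>) = 0"
    using antiper[of "\<lambda>t. D x t" z0 "\<lfloor>z\<rfloor>"] shift_z[OF assms(1,2,4)] unfolding D_def by simp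
  then have "D x z = 0" unfolding z0_def by simp
  then show ?thesis unfolding D_def LHS_def RHS_def by simp
qed


end
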